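(* Let $G$ be a finite graph with edge set $E$, and let $P$ be a set of unordered pairs $\{e_1,e_2\}$ of distinct edges of $G$. Then there exist an integer $r$ with $0\le r\le |P|$, a set $F=\{f_1,\dots,f_r\}$ of new labels disjoint from $E$, and a real matrix $A$ with columns labelled by $E\cup F$ such that: (i) after a permutation of columns, $A$ has the block form $$A=\begin{pmatrix} I_{\mathrm{rk}\, G} & 0 & C \\ 0 & I_{r} & D \end{pmatrix},$$ where $\mathrm{rk}\, G$ is the rank of the cycle matroid of $G$ (number of vertices minus number of connected components), the columns of the middle block are those labelled by $F$, and every entry of $C$ and $D$ lies in $\{0,1,-1\}$; (ii) the matrix $(I_{\mathrm{rk}\, G}\,|\,C)$, with its columns labelled by $E$, represents the cycle matroid of $G$ over $\mathbb{R}$ (so the matroid represented by $A$ is a coextension of the cycle matroid of $G$, i.e. contracting $F$ in it gives the cycle matroid of $G$); (iii) for every pair $\{e_1,e_2\}\in P$ there exist a column label $g\in E\cup F$ and nonzero real numbers $\alpha,\beta$ such that every vector $x\in\mathbb{R}^{E\cup F}$ with $Ax=0$ satisfies $x_g=\alpha x_{e_1}+\beta x_{e_2}$ (that is, the "momentum" of $g$ is a linear combination with both weights nonzero of the momenta of $e_1$ and $e_2$).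
   Context: A matroid on a finite set $E$ is given by its set of circuits. A real matrix with columns labelled by $E$ represents the matroid whose circuits are the minimal linearly dependent sets of columns. The cycle matroid of a graph $G$ has ground set the edge set and circuits the cycles of $G$; it is represented by the (directed) incidence matrix of $G$. A matroid $M$ on $E\cup F$ is a coextension of a matroid $N$ on $E$ if $N$ is obtained from $M$ by contracting $F$. Physically, the kernel of the representing matrix parametrizes assignments of momenta to edges satisfying momentum conservation (rows = momentum-conserving sets), and the set $P$ records pairs of edges whose momenta appear dotted together in the numerator of a Feynman integral; each new element of $F$ corresponds to an extra propagator whose momentum is a linear combination of the momenta of a pair in $P$. *)

theory Defs
  imports Complex_Main
begin

text \<open>A finite (multi)graph: finite vertex set V, finite edge set E, and each edge e
  has a set of end vertices ends e with one element (a loop) or two elements.\<close>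
definition finite_graph :: "'v set \<Rightarrow> 'e set \<Rightarrow> ('e \<Rightarrow> 'v set) \<Rightarrow> bool" where
  "finite_graph V E ends \<longleftrightarrow> finite V \<and> finite E \<and>
     (\<forall>e\<in>E. ends e \<subseteq> V \<and> (card (ends e) = 1 \<or> card (ends e) = 2))"

definition adj_rel :: "'e set \<Rightarrow> ('e \<Rightarrow> 'v set) \<Rightarrow> ('v \<times> 'v) set" where
  "adj_rel E ends = {(u, v). \<exists>e\<in>E. u \<in> ends e \<and> v \<in> ends e}"

definition components :: "'v set \<Rightarrow> 'e set \<Rightarrow> ('e \<Rightarrow> 'v set) \<Rightarrow> 'v set set" where
  "components V E ends = V // ((adj_rel E ends)\<^sup>*)"

definition graph_rank :: "'v set \<Rightarrow> 'e set \<Rightarrow> ('e \<Rightarrow> 'v set) \<Rightarrow> nat" where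
  "graph_rank V E ends = card V - card (components V E ends)"

definition is_cycle :: "'e set \<Rightarrow> ('e \<Rightarrow> 'v set) \<Rightarrow> 'e set \<Rightarrow> bool" where
  "is_cycle E ends S \<longleftrightarrow>
     (\<exists>vs es. length vs = length es \<and> length es \<ge> 1 \<and> distinct vs \<and> distinct es \<and>
        set es \<subseteq> E \<and> S = set es \<and>
        (\<forall>i < length es. ends (es ! i) = {vs ! i, vs ! ((i + 1) mod length es)}))"

definition cols_dependent :: "nat \<Rightarrow> (nat \<Rightarrow> 'c \<Rightarrow> real) \<Rightarrow> 'c set \<Rightarrow> bool" where
  "cols_dependent m M S \<longleftrightarrow>
     (\<exists>c :: 'c \<Rightarrow> real. (\<exists>s\<in>S. c s \<noteq> 0) \<and> (\<forall>i<m. (\<Sum>s\<in>S. c s * M i s) = 0))"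

definition matrix_circuit :: "nat \<Rightarrow> (nat \<Rightarrow> 'c \<Rightarrow> real) \<Rightarrow> 'c set \<Rightarrow> bool" where
  "matrix_circuit m M S \<longleftrightarrow> cols_dependent m M S \<and> (\<forall>T. T \<subset> S \<longrightarrow> \<not> cols_dependent m M T)"

definition represents :: "nat \<Rightarrow> (nat \<Rightarrow> 'c \<Rightarrow> real) \<Rightarrow> 'c set \<Rightarrow> ('c set \<Rightarrow> bool) \<Rightarrow> bool" where
  "represents m M X circ \<longleftrightarrow> (\<forall>S. S \<subseteq> X \<longrightarrow> (circ S \<longleftrightarrow> matrix_circuit m M S))"

end

theory Submission
  imports Defs
begin



lemma card12_eq:
  assumes "finite S" "card S = 1 \<or> card S = 2" "a \<in> S" "b \<in> S" "a \<noteq> b"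
  shows "S = {a, b}"
proof -
  have "card S \<noteq> 1"
  proof
    assume "card S = 1"
    then obtain x where "S = {x}" by (auto simp: card_1_singleton_iff)
    then show False using assms(3-5) by simp
  qed
  then have "card S = 2" using assms(2) by simp
  then obtain x y where xy: "S = {x,y}" "x \<noteq> y" by (auto simp: card_2_iff)
  then show ?thesis using assms(3-5) by fastforce
qed

locale G =
  fixes V :: "'v set" and E :: "'e set" and ends :: "'e \<Rightarrow> 'v set"
  assumes fg: "finite_graph V E ends"
begin

lemma finV: "finite V" and finE: "finite E"
  and endsV: "e \<in> E \<Longrightarrow> ends e \<subseteq> V"
  and ends12: "e \<in> E \<Longrightarrow> card (ends e) = 1 \<or> card (ends e) = 2"
  using fg unfolding finite_graph_def by auto

lemma ends_fin: "e \<in> E \<Longrightarrow> finite (ends e)"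
  using ends12 card.infinite by fastforce

lemma ends_ne: "e \<in> E \<Longrightarrow> ends e \<noteq> {}"
  using ends12 by fastforce

definition "adj = adj_rel E ends"

lemma adj_sym: "(u,v) \<in> adj \<Longrightarrow> (v,u) \<in> adj"
  unfolding adj_def adj_rel_def by auto

lemma adjV: "(u,v) \<in> adj \<Longrightarrow> u \<in> V \<and> v \<in> V"
  unfolding adj_def adj_rel_def using endsV by blast

lemma adj_edge: assumes "(u,v) \<in> adj" "u \<noteq> v" shows "\<exists>e\<in>E. ends e = {u,v}"
proof -
  obtain e where "e \<in> E" "u \<in> ends e" "v \<in> ends e" using assms(1) unfolding adj_def adj_rel_def by auto
  then show ?thesis using card12_eq[OF ends_fin ends12] assms(2) by metis
qed

lemma sym_adj: "sym (adj\<^sup>*)"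
  by (meson adj_sym sym_conv_converse_eq sym_def sym_rtrancl)

lemma rtr_sym: "(u,v) \<in> adj\<^sup>* \<Longrightarrow> (v,u) \<in> adj\<^sup>*"
  using sym_adj by (meson symD)

lemma rtrV: "(u,v) \<in> adj\<^sup>* \<Longrightarrow> u \<in> V \<Longrightarrow> v \<in> V"
  by (induction rule: rtrancl_induct) (auto dest: adjV)

definition "cmpn v = adj\<^sup>* `` {v}"
definition "rho v = (SOME r. r \<in> cmpn v)"

lemma comp_eq: "(u,v) \<in> adj\<^sup>* \<Longrightarrow> cmpn u = cmpn v"
  unfolding cmpn_def using rtr_sym by (meson Image_singleton_iff equalityI rtrancl_trans subsetI)

lemma rho_eq: "(u,v) \<in> adj\<^sup>* \<Longrightarrow> rho u = rho v"
  unfolding rho_def using comp_eq by simp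

lemma rho_in: "(v, rho v) \<in> adj\<^sup>*"
proof -
  have "v \<in> cmpn v" unfolding cmpn_def by auto
  then have "rho v \<in> cmpn v" unfolding rho_def by (metis someI)
  then show ?thesis unfolding cmpn_def by auto
qed

lemma rhoV: "v \<in> V \<Longrightarrow> rho v \<in> V" using rho_in rtrV by blast

lemma rho_rho: "rho (rho v) = rho v"
  using rho_eq[OF rho_in] by simp

definition "R = {v\<in>V. rho v = v}"

definition "d v = (LEAST n. (v, rho v) \<in> adj ^^ n)"

lemma d_ex: "(v, rho v) \<in> adj ^^ d v"
proof -
  obtain n where "(v, rho v) \<in> adj ^^ n" using rho_in rtrancl_power by blast
  then show ?thesis unfolding d_def by (rule LeastI)
qed

lemma d0: "d v = 0 \<longleftrightarrow> rho v = v"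
proof
  assume "d v = 0" then show "rho v = v" using d_ex[of v] by simp
next
  assume "rho v = v" then have "(v, rho v) \<in> adj ^^ 0" by simp
  then show "d v = 0" unfolding d_def by (metis Least_le le_zero_eq)
qed

definition "par v = (SOME u. (v,u) \<in> adj \<and> d u < d v)"

lemma par: assumes "v \<in> V - R" shows "(v, par v) \<in> adj" "d (par v) < d v"
proof -
  have "d v \<noteq> 0" using assms d0 R_def by auto
  then obtain m where m: "d v = Suc m" using not0_implies_Suc by blast
  then obtain u where u: "(v,u) \<in> adj" "(u, rho v) \<in> adj ^^ m"
    using d_ex[of v] by (metis relpow_Suc_D2)
  have "rho u = rho v" using u(1) rho_eq by (metis r_into_rtrancl)
  then have "d u \<le> m" unfolding d_def using u(2) by (metis Least_le)
  then have "\<exists>u. (v,u) \<in> adj \<and> d u < d v" using u m by auto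
  then have "(v, par v) \<in> adj \<and> d (par v) < d v" unfolding par_def
    by (rule someI_ex[where P="\<lambda>u. (v,u) \<in> adj \<and> d u < d v"])
  then show "(v, par v) \<in> adj" "d (par v) < d v" by auto
qed

lemma parV: "v \<in> V - R \<Longrightarrow> par v \<in> V" using par adjV by blast
lemma par_ne: "v \<in> V - R \<Longrightarrow> par v \<noteq> v" using par by fastforce
lemma rho_par: "v \<in> V - R \<Longrightarrow> rho (par v) = rho v" using par(1) rho_eq r_into_rtrancl by metis

definition "pe v = (SOME e. e \<in> E \<and> ends e = {v, par v})"

lemma pe: assumes "v \<in> V - R" shows "pe v \<in> E \<and> ends (pe v) = {v, par v}"
proof -
  have "\<exists>e. e \<in> E \<and> ends e = {v, par v}" using adj_edge[OF par(1)[OF assms] par_ne[OF assms, symmetric]] by blast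
  then show ?thesis unfolding pe_def by (rule someI_ex[where P="\<lambda>e. e \<in> E \<and> ends e = {v, par v}"])
qed

lemma pe_inj: "inj_on pe (V - R)"
proof (rule inj_onI)
  fix x y assume xy: "x \<in> V - R" "y \<in> V - R" "pe x = pe y"
  then have "{x, par x} = {y, par y}" using pe by metis
  moreover have "d (par x) < d x" "d (par y) < d y" using par xy by auto
  ultimately show "x = y"
  proof -
    assume a: "{x, par x} = {y, par y}" and b: "d (par x) < d x" "d (par y) < d y"
    show "x = y"
    proof (rule ccontr)
      assume "x \<noteq> y"
      then have "x = par y" "y = par x" using a unfolding doubleton_eq_iff by auto
      then show False using b by simp
    qed
  qed
qed

definition "up v = (if v \<in> V - R then par v else v)"

lemma upV: "v \<in> V \<Longrightarrow> up v \<in> V" unfolding up_def using parV by auto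
lemma rho_up: "rho (up v) = rho v" unfolding up_def using rho_par by auto
lemma d_up: "d (up v) \<le> d v" unfolding up_def using par by fastforce

lemma funpow_upV: "v \<in> V \<Longrightarrow> (up^^n) v \<in> V" by (induction n) (auto simp: upV)
lemma rho_funpow: "rho ((up^^n) v) = rho v" by (induction n) (auto simp: rho_up)
lemma d_funpow: "d ((up^^n) v) \<le> d v" by (induction n) (auto intro: le_trans[OF d_up])
lemma funpow_R: "v \<in> R \<Longrightarrow> (up^^n) v = v" by (induction n) (auto simp: up_def)

definition "anc w v \<longleftrightarrow> (\<exists>n. (up^^n) w = v)"

lemma anc_refl: "anc w w" unfolding anc_def by (metis funpow_0)
lemma anc_trans: "anc u v \<Longrightarrow> anc v w \<Longrightarrow> anc u w"
  unfolding anc_def by (metis funpow_add o_apply)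
lemma anc_d: "anc w v \<Longrightarrow> d v \<le> d w" unfolding anc_def using d_funpow by blast
lemma ancV: "anc w v \<Longrightarrow> w \<in> V \<Longrightarrow> v \<in> V" unfolding anc_def using funpow_upV by blast
lemma anc_rho: "anc w v \<Longrightarrow> rho v = rho w" unfolding anc_def using rho_funpow by blast

lemma anc_step: assumes "w \<in> V"
  shows "anc w v \<longleftrightarrow> w = v \<or> (w \<in> V - R \<and> anc (par w) v)"
proof
  assume "anc w v"
  then obtain n where n: "(up^^n) w = v" unfolding anc_def by blast
  show "w = v \<or> (w \<in> V - R \<and> anc (par w) v)"
  proof (cases n)
    case 0 then show ?thesis using n by simp
  next
    case (Suc m)
    show ?thesis
    proof (cases "w \<in> R")
      case True then show ?thesis using n funpow_R by auto
    next
      case False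
      have "(up^^m) (up w) = v" using n Suc by (simp only: funpow_Suc_right o_apply)
      then have "(up^^m) (par w) = v" using False assms by (simp add: up_def)
      then show ?thesis using False assms anc_def by auto
    qed
  qed
next
  assume "w = v \<or> (w \<in> V - R \<and> anc (par w) v)"
  then show "anc w v"
  proof
    assume "w = v" then show ?thesis by (simp add: anc_refl)
  next
    assume a: "w \<in> V - R \<and> anc (par w) v"
    then obtain n where "(up^^n) (par w) = v" unfolding anc_def by blast
      have "(up^^(Suc n)) w = (up^^n) (up w)" by (simp only: funpow_Suc_right o_apply)
    then have "(up^^(Suc n)) w = v" using a \<open>(up^^n) (par w) = v\<close> by (simp add: up_def)
    then show ?thesis unfolding anc_def by blast
  qed
qed

lemma anc_chain: "anc w x \<Longrightarrow> anc w y \<Longrightarrow> anc x y \<or> anc y x"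
proof -
  assume "anc w x" "anc w y"
  then obtain n m where nm: "(up^^n) w = x" "(up^^m) w = y" unfolding anc_def by blast
  show ?thesis
  proof (cases "n \<le> m")
    case True
    have "m = (m-n)+n" using True by simp
    then have "(up^^m) w = (up^^((m-n)+n)) w" by simp
    then have "(up^^m) w = (up^^(m-n)) ((up^^n) w)" by (simp only: funpow_add o_apply)
    then have "(up^^(m-n)) x = y" using nm by simp
    then show ?thesis unfolding anc_def by blast
  next
    case False
    have "n = (n-m)+m" using False by simp
    then have "(up^^n) w = (up^^((n-m)+m)) w" by simp
    then have "(up^^n) w = (up^^(n-m)) ((up^^m) w)" by (simp only: funpow_add o_apply)
    then have "(up^^(n-m)) y = x" using nm by simp
    then show ?thesis unfolding anc_def by blast
  qed
qed

lemma anc_root: "w \<in> V \<Longrightarrow> anc w (rho w)"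
proof (induction "d w" arbitrary: w rule: less_induct)
  case less
  show ?case
  proof (cases "w \<in> R")
    case True then show ?thesis using R_def anc_refl by auto
  next
    case False
    then have "anc (par w) (rho (par w))" using less par parV by auto
    moreover have "w \<in> V - R" using less False by auto
    ultimately show ?thesis using anc_step[OF less(2), of "rho w"] rho_par by metis
  qed
qed

lemma anc_R: "anc w r \<Longrightarrow> r \<in> R \<Longrightarrow> r = rho w"
  using anc_rho R_def by auto

end


context G begin

definition "etl e = (SOME a. a \<in> ends e)"
definition "ehd e = (SOME b. ends e = {etl e, b})"

lemma etlhd: assumes "e \<in> E" shows "ends e = {etl e, ehd e}"
proof -
  have "\<exists>a. a \<in> ends e" using ends_ne[OF assms] by blast
  then have t: "etl e \<in> ends e" unfolding etl_def by (rule someI_ex[where P="\<lambda>a. a \<in> ends e"])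
  have "\<exists>b. ends e = {etl e, b}"
  proof (cases "\<exists>b\<in>ends e. b \<noteq> etl e")
    case True
    then obtain b where "b \<in> ends e" "b \<noteq> etl e" by blast
    then show ?thesis using card12_eq[OF ends_fin[OF assms] ends12[OF assms] t] by blast
  next
    case False then have "ends e = {etl e, etl e}" using t by blast
    then show ?thesis by blast
  qed
  then show ?thesis unfolding ehd_def by (rule someI_ex[where P="\<lambda>b. ends e = {etl e, b}"])
qed

lemma etlV: "e \<in> E \<Longrightarrow> etl e \<in> V" using etlhd endsV by blast
lemma ehdV: "e \<in> E \<Longrightarrow> ehd e \<in> V" using etlhd endsV by blast

definition N :: "'v \<Rightarrow> 'e \<Rightarrow> real" where
  "N v e = (if etl e = v then 1 else 0) - (if ehd e = v then 1 else 0)"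

definition dlt :: "'v set \<Rightarrow> 'e \<Rightarrow> real" where
  "dlt D e = (if etl e \<in> D then 1 else 0) - (if ehd e \<in> D then 1 else 0)"

lemma dlt_vals: "dlt D e \<in> {-1, 0, 1}" unfolding dlt_def by auto

lemma dlt_sum: assumes "finite D" shows "dlt D e = (\<Sum>v\<in>D. N v e)"
  using assms unfolding dlt_def N_def by (simp add: sum_subtractf)

definition "Dset v = {w\<in>V. anc w v}"

lemma Dset_fin: "finite (Dset v)" unfolding Dset_def using finV by simp

definition "Ch v = {c\<in>V - R. par c = v}"

lemma Ch_fin: "finite (Ch v)" unfolding Ch_def using finV by simp

lemma child_unique: assumes "c1 \<in> Ch v" "c2 \<in> Ch v" "a \<in> Dset c1" "a \<in> Dset c2"
  shows "c1 = c2"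
proof (rule ccontr)
  assume ne: "c1 \<noteq> c2"
  have c: "c1 \<in> V - R" "c2 \<in> V - R" "par c1 = v" "par c2 = v" using assms(1,2) Ch_def by auto
  have "anc a c1" "anc a c2" using assms(3,4) Dset_def by auto
  then have "anc c1 c2 \<or> anc c2 c1" by (rule anc_chain)
  then show False
  proof
    assume "anc c1 c2"
    then have "anc v c2" using anc_step[of c1 c2] c ne by auto
    then have "d c2 \<le> d v" by (rule anc_d)
    then show False using par(2)[OF c(2)] c(4) by simp
  next
    assume "anc c2 c1"
    then have "anc v c1" using anc_step[of c2 c1] c ne by auto
    then have "d c1 \<le> d v" by (rule anc_d)
    then show False using par(2)[OF c(1)] c(3) by simp
  qed
qed

lemma child_exists: "a \<in> V \<Longrightarrow> anc a v \<Longrightarrow> a \<noteq> v \<Longrightarrow> \<exists>c\<in>Ch v. a \<in> Dset c"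
proof (induction "d a" arbitrary: a rule: less_induct)
  case less
  have a: "a \<in> V - R" "anc (par a) v" using anc_step[OF less(2)] less(3,4) by auto
  show ?case
  proof (cases "par a = v")
    case True
    then have "a \<in> Ch v" using a Ch_def by auto
    then show ?thesis using less(2) anc_refl Dset_def by blast
  next
    case False
    then obtain c where c: "c \<in> Ch v" "par a \<in> Dset c"
      using less(1)[of "par a"] par(2)[OF a(1)] parV[OF a(1)] a(2) by blast
    then have "anc a c" using anc_step[OF less(2)] a(1) Dset_def by auto
    then show ?thesis using c less(2) Dset_def by blast
  qed
qed

lemma not_in_child: assumes "c \<in> Ch v" shows "v \<notin> Dset c"
proof
  assume "v \<in> Dset c"
  then have "d c \<le> d v" using anc_d Dset_def by auto
  moreover have "d v < d c" using assms par(2) Ch_def by auto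
  ultimately show False by simp
qed

lemma ind_decomp: assumes "a \<in> V" "v \<in> V"
  shows "(if a \<in> Dset v then 1 else 0) = (if a = v then 1 else 0) + (\<Sum>c\<in>Ch v. (if a \<in> Dset c then 1 else 0 :: real))"
proof (cases "a = v")
  case True
  then have "\<forall>c\<in>Ch v. a \<notin> Dset c" using not_in_child by blast
  then show ?thesis using True assms anc_refl Dset_def by auto
next
  case False
  show ?thesis
  proof (cases "a \<in> Dset v")
    case True
    then obtain c0 where c0: "c0 \<in> Ch v" "a \<in> Dset c0" using child_exists False Dset_def by blast
    then have h: "\<forall>c\<in>Ch v. (if a \<in> Dset c then 1 else 0 :: real) = (if c = c0 then 1 else 0)"
      using child_unique by fastforce
    then have "(\<Sum>c\<in>Ch v. (if a \<in> Dset c then 1 else 0 :: real)) = (\<Sum>c\<in>Ch v. (if c = c0 then 1 else 0))"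
      using h by (intro sum.cong) auto
    also have "\<dots> = 1" using c0(1) Ch_fin by simp
    finally show ?thesis using True False by simp
  next
    case F2: False
    have "\<forall>c\<in>Ch v. a \<notin> Dset c"
    proof
      fix c assume c: "c \<in> Ch v"
      show "a \<notin> Dset c"
      proof
        assume "a \<in> Dset c"
        then have "anc a c" "anc c v" using c Ch_def Dset_def anc_step[of c v] anc_refl by auto
        then show False using F2 anc_trans assms Dset_def by blast
      qed
    qed
    then show ?thesis using F2 False by auto
  qed
qed

lemma N_decomp: assumes "e \<in> E" "v \<in> V"
  shows "N v e = dlt (Dset v) e - (\<Sum>c\<in>Ch v. dlt (Dset c) e)"
  using ind_decomp[OF etlV[OF assms(1)] assms(2)] ind_decomp[OF ehdV[OF assms(1)] assms(2)]
  unfolding N_def dlt_def by (simp add: sum_subtractf)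

end


context G begin

definition "rk = graph_rank V E ends"

lemma RV: "R \<subseteq> V" unfolding R_def by auto

lemma comps: "components V E ends = cmpn ` V"
  unfolding components_def quotient_def cmpn_def adj_def by auto

lemma card_R: "card R = card (components V E ends)"
proof -
  have "bij_betw cmpn R (cmpn ` V)"
    unfolding bij_betw_def
  proof
    show "inj_on cmpn R"
    proof (rule inj_onI)
      fix x y assume "x \<in> R" "y \<in> R" "cmpn x = cmpn y"
      then have "rho x = rho y" unfolding rho_def by simp
      then show "x = y" using \<open>x \<in> R\<close> \<open>y \<in> R\<close> unfolding R_def by simp
    qed
    show "cmpn ` R = cmpn ` V"
    proof
      show "cmpn ` R \<subseteq> cmpn ` V" using RV by auto
      show "cmpn ` V \<subseteq> cmpn ` R"
      proof
        fix K assume "K \<in> cmpn ` V"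
        then obtain v where v: "v \<in> V" "K = cmpn v" by auto
        have "rho v \<in> R" using rhoV[OF v(1)] rho_rho R_def by auto
        moreover have "cmpn v = cmpn (rho v)" using comp_eq[OF rho_in] .
        ultimately show "K \<in> cmpn ` R" using v by auto
      qed
    qed
  qed
  then show ?thesis using comps bij_betw_same_card by metis
qed

lemma card_VR: "card (V - R) = rk"
  unfolding rk_def graph_rank_def using card_R card_Diff_subset[OF finite_subset[OF RV finV] RV] by simp

definition "tau = (SOME h. bij_betw h {..<rk} (V - R))"

lemma tau: "bij_betw tau {..<rk} (V - R)"
proof -
  have "\<exists>h. bij_betw h {..<rk} (V - R)"
    using ex_bij_betw_nat_finite[of "V - R"] finV card_VR by (simp add: atLeast0LessThan)
  then show ?thesis unfolding tau_def by (rule someI_ex[where P="\<lambda>h. bij_betw h {..<rk} (V - R)"])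
qed

lemma tau_in: "k < rk \<Longrightarrow> tau k \<in> V - R" using tau bij_betwE by blast
lemma tau_inj: "i < rk \<Longrightarrow> k < rk \<Longrightarrow> tau i = tau k \<Longrightarrow> i = k"
  using tau unfolding bij_betw_def inj_on_def by blast
lemma tau_surj: "c \<in> V - R \<Longrightarrow> \<exists>k<rk. tau k = c"
  using tau unfolding bij_betw_def by force

definition "sig k = pe (tau k)"
definition "E1 = sig ` {..<rk}"

lemma sig_bij: "bij_betw sig {..<rk} E1"
proof -
  have "inj_on sig {..<rk}"
  proof (rule inj_onI)
    fix i k assume "i \<in> {..<rk}" "k \<in> {..<rk}" "sig i = sig k"
    then show "i = k" unfolding sig_def using tau_in tau_inj pe_inj inj_on_def by (metis lessThan_iff)
  qed
  then show ?thesis unfolding E1_def bij_betw_def by simp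
qed

lemma E1E: "E1 \<subseteq> E" unfolding E1_def sig_def using tau_in pe by auto

definition "sg k = dlt (Dset (tau k)) (sig k)"
definition "M k e = sg k * dlt (Dset (tau k)) e"

lemma dlt_pe: assumes "c \<in> V - R" "c' \<in> V - R"
  shows "c' \<noteq> c \<Longrightarrow> dlt (Dset c) (pe c') = 0" and "dlt (Dset c) (pe c) \<in> {-1, 1}"
proof -
  have e: "ends (pe c') = {c', par c'}" "pe c' \<in> E" using pe[OF assms(2)] by auto
  then have th: "{etl (pe c'), ehd (pe c')} = {c', par c'}" using etlhd by metis
  have cV: "c' \<in> V" using assms by auto
  have mem: "c' \<in> Dset c \<longleftrightarrow> c' = c \<or> par c' \<in> Dset c"
    using anc_step[OF cV] assms parV[OF assms(2)] Dset_def by auto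
  show "c' \<noteq> c \<Longrightarrow> dlt (Dset c) (pe c') = 0"
  proof -
    assume "c' \<noteq> c"
    then have "c' \<in> Dset c \<longleftrightarrow> par c' \<in> Dset c" using mem by auto
    then show ?thesis using th unfolding dlt_def doubleton_eq_iff by auto
  qed
  have e2: "ends (pe c) = {c, par c}" "pe c \<in> E" using pe[OF assms(1)] by auto
  then have th2: "{etl (pe c), ehd (pe c)} = {c, par c}" using etlhd by metis
  have "c \<in> Dset c" using anc_refl assms Dset_def by auto
  moreover have "par c \<notin> Dset c"
  proof
    assume "par c \<in> Dset c" then have "d c \<le> d (par c)" using anc_d Dset_def by auto
    then show False using par(2)[OF assms(1)] by simp
  qed
  moreover have "par c \<noteq> c" using par_ne assms by auto
  ultimately show "dlt (Dset c) (pe c) \<in> {-1, 1}" using th2 unfolding dlt_def doubleton_eq_iff by auto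
qed

lemma sg_vals: "k < rk \<Longrightarrow> sg k \<in> {-1, 1}"
  unfolding sg_def sig_def using dlt_pe(2) tau_in by blast

lemma M_id: assumes "i < rk" "k < rk" shows "M i (sig k) = (if i = k then 1 else 0)"
proof (cases "i = k")
  case True
  then show ?thesis using sg_vals[OF assms(1)] unfolding M_def sg_def by auto
next
  case False
  then have "tau k \<noteq> tau i" using tau_inj assms by metis
  then show ?thesis using dlt_pe(1)[OF tau_in[OF assms(1)] tau_in[OF assms(2)]] False
    unfolding M_def sig_def by simp
qed

lemma M_vals: assumes "k < rk" shows "M k e \<in> {-1, 0, 1}"
  using sg_vals[OF assms] dlt_vals[of "Dset (tau k)" e] unfolding M_def by auto

lemma root_dlt: assumes "r \<in> R" "e \<in> E" shows "dlt (Dset r) e = 0"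
proof -
  have D: "Dset r = {w\<in>V. rho w = r}"
    using anc_R[OF _ assms(1)] anc_root assms(1) R_def Dset_def by auto
  have "rho (etl e) = rho (ehd e)"
  proof (cases "etl e = ehd e")
    case False
    have "(etl e, ehd e) \<in> adj" unfolding adj_def adj_rel_def using etlhd[OF assms(2)] assms(2) by blast
    then show ?thesis using rho_eq by blast
  qed simp
  then show ?thesis unfolding dlt_def D using etlV ehdV assms(2) by auto
qed

lemma K1: "(\<forall>i<rk. (\<Sum>e\<in>E. M i e * x e) = 0) \<longleftrightarrow> (\<forall>v\<in>V. (\<Sum>e\<in>E. N v e * x e) = 0)"
proof
  assume fl: "\<forall>v\<in>V. (\<Sum>e\<in>E. N v e * x e) = 0"
  show "\<forall>i<rk. (\<Sum>e\<in>E. M i e * x e) = 0"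
  proof (intro allI impI)
    fix i assume i: "i < rk"
    have sub: "Dset (tau i) \<subseteq> V" using Dset_def by auto
    have "(\<Sum>e\<in>E. M i e * x e) = sg i * (\<Sum>e\<in>E. dlt (Dset (tau i)) e * x e)"
      unfolding M_def by (simp add: sum_distrib_left mult.assoc)
    also have "\<dots> = sg i * (\<Sum>e\<in>E. (\<Sum>v\<in>Dset (tau i). N v e) * x e)"
      by (simp only: dlt_sum[OF Dset_fin])
    also have "\<dots> = sg i * (\<Sum>v\<in>Dset (tau i). (\<Sum>e\<in>E. N v e * x e))"
      by (simp add: sum_distrib_right sum.swap[of _ E])
    also have "\<dots> = 0"
    proof -
      have "\<forall>v\<in>Dset (tau i). (\<Sum>e\<in>E. N v e * x e) = 0" using fl sub by blast
      then show ?thesis by simp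
    qed
    finally show "(\<Sum>e\<in>E. M i e * x e) = 0" .
  qed
next
  assume mx: "\<forall>i<rk. (\<Sum>e\<in>E. M i e * x e) = 0"
  have cz: "(\<Sum>e\<in>E. dlt (Dset c) e * x e) = 0" if c: "c \<in> V - R" for c
  proof -
    obtain k where k: "k < rk" "tau k = c" using tau_surj c by blast
    have "sg k * (\<Sum>e\<in>E. dlt (Dset c) e * x e) = (\<Sum>e\<in>E. M k e * x e)"
      unfolding M_def using k by (simp add: sum_distrib_left mult.assoc)
    then show ?thesis using mx k sg_vals[OF k(1)] by auto
  qed
  have dz: "(\<Sum>e\<in>E. dlt (Dset v) e * x e) = 0" if v: "v \<in> V" for v
  proof (cases "v \<in> R")
    case True then show ?thesis using root_dlt by simp
  next
    case False then show ?thesis using cz v by simp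
  qed
  show "\<forall>v\<in>V. (\<Sum>e\<in>E. N v e * x e) = 0"
  proof
    fix v assume v: "v \<in> V"
    have "(\<Sum>e\<in>E. N v e * x e) = (\<Sum>e\<in>E. dlt (Dset v) e * x e) - (\<Sum>c\<in>Ch v. (\<Sum>e\<in>E. dlt (Dset c) e * x e))"
      using N_decomp[OF _ v] by (simp add: left_diff_distrib sum_subtractf sum_distrib_right sum.swap[of _ E])
    also have "\<dots> = 0" using dz[OF v] cz Ch_def by simp
    finally show "(\<Sum>e\<in>E. N v e * x e) = 0" .
  qed
qed

lemma laminar: assumes "c1 \<in> V - R" "c2 \<in> V - R"
  shows "(\<forall>e. dlt (Dset c1) e * dlt (Dset c2) e \<noteq> -1) \<or> (\<forall>e. dlt (Dset c1) e * dlt (Dset c2) e \<noteq> 1)"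
proof -
  have "Dset c1 \<subseteq> Dset c2 \<or> Dset c2 \<subseteq> Dset c1 \<or> Dset c1 \<inter> Dset c2 = {}"
  proof (cases "Dset c1 \<inter> Dset c2 = {}")
    case False
    then obtain w where "anc w c1" "anc w c2" unfolding Dset_def by auto
    then have "anc c1 c2 \<or> anc c2 c1" by (rule anc_chain)
    then show ?thesis unfolding Dset_def using anc_trans by blast
  qed simp
  then show ?thesis unfolding dlt_def by (elim disjE) (auto split: if_splits)
qed

end


context G begin

definition "flow x \<longleftrightarrow> (\<forall>v\<in>V. (\<Sum>e\<in>E. N v e * x e) = 0)"
definition "dep S \<longleftrightarrow> (\<exists>x. flow x \<and> (\<forall>e. e \<notin> S \<longrightarrow> x e = 0) \<and> (\<exists>s\<in>S. x s \<noteq> 0))"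

lemma N_nz: "N w e \<noteq> 0 \<Longrightarrow> e \<in> E \<Longrightarrow> w \<in> ends e"
  unfolding N_def using etlhd by (auto split: if_splits)

lemma N_nz2: "e \<in> E \<Longrightarrow> w \<in> ends e \<Longrightarrow> etl e \<noteq> ehd e \<Longrightarrow> N w e \<noteq> 0"
  unfolding N_def using etlhd by auto

lemma flow_at:
  assumes "flow x" "\<forall>e. e \<notin> S \<longrightarrow> x e = 0" "S \<subseteq> E" "w \<in> V" "F \<subseteq> E"
    "\<forall>e\<in>S. w \<in> ends e \<longrightarrow> e \<in> F"
  shows "(\<Sum>e\<in>F. N w e * x e) = 0"
proof -
  have "(\<Sum>e\<in>F. N w e * x e) = (\<Sum>e\<in>E. N w e * x e)"
  proof (rule sum.mono_neutral_left[OF finE assms(5)])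
    show "\<forall>i\<in>E - F. N w i * x i = 0"
    proof
      fix e assume e: "e \<in> E - F"
      show "N w e * x e = 0"
      proof (cases "e \<in> S")
        case True
        then have "w \<notin> ends e" using assms(6) e by auto
        then have "N w e = 0" using N_nz e by auto
        then show ?thesis by simp
      qed (use assms(2) in simp)
    qed
  qed
  then show ?thesis using assms(1,4) flow_def by simp
qed

lemma cycle_dep:
  assumes len: "length vs = length es" "length es \<ge> 1" and dist: "distinct vs" "distinct es"
    and sub: "set es \<subseteq> E"
    and en: "\<forall>i < length es. ends (es ! i) = {vs ! i, vs ! ((i + 1) mod length es)}"
  shows "dep (set es)"
proof -
  define n where "n = length es"
  define sgn where "sgn i = (if etl (es!i) = vs!i then 1 else -1 :: real)" for i
  define x where "x e = (\<Sum>l<n. if es!l = e then sgn l else 0)" for e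
  have npos: "0 < n" using len n_def by linarith
  have esE: "l < n \<Longrightarrow> es!l \<in> E" for l using sub n_def by auto
  have pt: "sgn l * N v (es!l) = (if v = vs!l then 1 else 0) - (if v = vs!((l+1) mod n) then 1 else 0)"
    if l: "l < n" for l v
  proof -
    have "{etl (es!l), ehd (es!l)} = {vs!l, vs!((l+1) mod n)}"
      using en etlhd[OF esE[OF l]] l n_def by metis
    then show ?thesis unfolding sgn_def N_def doubleton_eq_iff by auto
  qed
  have fl: "flow x" unfolding flow_def
  proof
    fix v assume "v \<in> V"
    have "(\<Sum>e\<in>E. N v e * x e) = (\<Sum>l<n. (\<Sum>e\<in>E. if es!l = e then N v e * sgn l else 0))"
      unfolding x_def sum_distrib_left by (subst sum.swap) (intro sum.cong refl, simp)
    also have "\<dots> = (\<Sum>l<n. sgn l * N v (es!l))" 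
    proof (intro sum.cong refl)
      fix l assume "l \<in> {..<n}"
      then show "(\<Sum>e\<in>E. if es!l = e then N v e * sgn l else 0) = sgn l * N v (es!l)"
        using esE[of l] finE by (simp add: sum.delta' mult.commute)
    qed
    also have "\<dots> = (\<Sum>l<n. (if v = vs!l then 1 else 0)) - (\<Sum>l<n. (if v = vs!((l+1) mod n) then 1 else 0))"
      using pt by (simp add: sum_subtractf)
    also have "(\<Sum>l<n. (if v = vs!((l+1) mod n) then 1 else 0 :: real)) = (\<Sum>l<n. (if v = vs!l then 1 else 0))"
    proof -
      have inj: "inj_on (\<lambda>l. (l+1) mod n) {..<n}"
      proof (rule inj_onI)
        fix a b assume ab: "a \<in> {..<n}" "b \<in> {..<n}" "(a+1) mod n = (b+1) mod n"
        then show "a = b" by (auto simp: mod_if split: if_splits)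
      qed
      have im: "(\<lambda>l. (l+1) mod n) ` {..<n} \<subseteq> {..<n}" using npos by auto
      have "bij_betw (\<lambda>l. (l+1) mod n) {..<n} {..<n}"
        unfolding bij_betw_def using inj endo_inj_surj[OF _ im inj] by simp
      then show ?thesis by (rule sum.reindex_bij_betw[where g="\<lambda>l. (if v = vs!l then 1 else 0 :: real)"])
    qed
    finally show "(\<Sum>e\<in>E. N v e * x e) = 0" by simp
  qed
  have supp: "\<forall>e. e \<notin> set es \<longrightarrow> x e = 0" unfolding x_def n_def using nth_mem by (fastforce intro!: sum.neutral)
  have "x (es!0) = sgn 0"
  proof -
    have "x (es!0) = (\<Sum>l<n. if l = 0 then sgn l else 0)"
      unfolding x_def using dist(2) n_def len npos by (intro sum.cong) (auto simp: nth_eq_iff_index_eq)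
    also have "\<dots> = sgn 0" using npos by simp
    finally show ?thesis .
  qed
  then have "x (es!0) \<noteq> 0" unfolding sgn_def by simp
  moreover have "es!0 \<in> set es" using npos n_def by simp
  ultimately show ?thesis unfolding dep_def using fl supp by blast
qed

end



lemma rot_inj: "a < (n::nat) \<Longrightarrow> b < n \<Longrightarrow> (a+1) mod n = (b+1) mod n \<Longrightarrow> a = b"
  by (auto simp: mod_if split: if_splits)

lemma rot_ne: "a < (n::nat) \<Longrightarrow> 2 \<le> n \<Longrightarrow> (a+1) mod n \<noteq> a"
  by (auto simp: mod_if split: if_splits)

context G begin

lemma cycle_min:
  assumes len: "length vs = length es" "length es \<ge> 1" and dist: "distinct vs" "distinct es"
    and sub: "set es \<subseteq> E"
    and en: "\<forall>i < length es. ends (es ! i) = {vs ! i, vs ! ((i + 1) mod length es)}"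
    and fl: "flow x" and sT: "\<forall>e. e \<notin> T \<longrightarrow> x e = 0" and T: "T \<subset> set es"
  shows "\<forall>s\<in>set es. x s = 0"
proof -
  define n where "n = length es"
  have npos: "0 < n" using len n_def by linarith
  obtain e0 where "e0 \<in> set es" "e0 \<notin> T" using T by blast
  then obtain k where k: "k < n" "es!k \<notin> T" using in_set_conv_nth n_def by metis
  have supp: "\<forall>e. e \<notin> set es \<longrightarrow> x e = 0" using sT T by blast
  have endsn: "l < n \<Longrightarrow> ends (es!l) = {vs!l, vs!((l+1) mod n)}" for l using en n_def by simp
  have esE: "l < n \<Longrightarrow> es!l \<in> E" for l using sub n_def by auto
  have vsV: "l < n \<Longrightarrow> vs!l \<in> V" for l using endsn esE endsV by blast
  have step: "x (es!((i+1) mod n)) = 0" if i: "i < n" and xi: "x (es!i) = 0" for i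
  proof (cases "n = 1")
    case True then show ?thesis using xi i by simp
  next
    case False
    then have n2: "2 \<le> n" using npos by linarith
    define j where "j = (i+1) mod n"
    have j: "j < n" "j \<noteq> i" using j_def npos rot_ne[OF i n2] by auto
    have w: "vs!j \<in> V" using vsV j by simp
    have ij: "es!i \<noteq> es!j" using nth_eq_iff_index_eq[OF dist(2), of i j] i j n_def by simp
    have F: "\<forall>e\<in>set es. vs!j \<in> ends e \<longrightarrow> e \<in> {es!i, es!j}"
    proof (intro ballI impI)
      fix e assume e: "e \<in> set es" "vs!j \<in> ends e"
      then obtain l where l: "l < n" "e = es!l" using in_set_conv_nth n_def by metis
      then have "vs!j = vs!l \<or> vs!j = vs!((l+1) mod n)" using e endsn by auto
      then show "e \<in> {es!i, es!j}"
      proof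
        assume "vs!j = vs!l" then have "j = l" using nth_eq_iff_index_eq[OF dist(1), of j l] len l j n_def by simp
        then show ?thesis using l by simp
      next
        assume "vs!j = vs!((l+1) mod n)"
        moreover have "(l+1) mod n < n" using npos by simp
        ultimately have "j = (l+1) mod n" using nth_eq_iff_index_eq[OF dist(1), of j "(l+1) mod n"] len j n_def by simp
        then have "(l+1) mod n = (i+1) mod n" using j_def by simp
        then have "l = i" using rot_inj[OF l(1) i] by simp
        then show ?thesis using l by simp
      qed
    qed
    have "(\<Sum>e\<in>{es!i, es!j}. N (vs!j) e * x e) = 0"
      by (rule flow_at[OF fl supp sub w]) (use esE i j F in auto)
    then have "N (vs!j) (es!j) * x (es!j) = 0" using ij xi by simp
    moreover have "N (vs!j) (es!j) \<noteq> 0"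
    proof (rule N_nz2[OF esE[OF j(1)]])
      show "vs!j \<in> ends (es!j)" using endsn j by simp
      have "(j+1) mod n \<noteq> j" using rot_ne[OF j(1) n2] .
      moreover have "(j+1) mod n < n" using npos by simp
      ultimately have "vs!j \<noteq> vs!((j+1) mod n)" using nth_eq_iff_index_eq[OF dist(1), of j "(j+1) mod n"] len j n_def by simp
      moreover have "{etl (es!j), ehd (es!j)} = {vs!j, vs!((j+1) mod n)}"
        using etlhd[OF esE[OF j(1)]] endsn[OF j(1)] by simp
      ultimately show "etl (es!j) \<noteq> ehd (es!j)" by (auto simp: doubleton_eq_iff)
    qed
    ultimately show ?thesis using j_def by simp
  qed
  have all: "x (es!((k+m) mod n)) = 0" for m
  proof (induction m)
    case 0 then show ?case using k sT by simp
  next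
    case (Suc m)
    have "(k + Suc m) mod n = ((k+m) mod n + 1) mod n" by (simp add: mod_Suc_eq)
    then show ?case using step[OF _ Suc] npos by simp
  qed
  show ?thesis
  proof
    fix s assume "s \<in> set es"
    then obtain l where l: "l < n" "s = es!l" using in_set_conv_nth n_def by metis
    have "(k + (n - k + l)) mod n = l" using k l by simp
    then show "x s = 0" using all[of "n - k + l"] l by simp
  qed
qed

end


context G begin

definition "pth S p \<longleftrightarrow> (let vs = fst p; es = snd p in
   length vs = Suc (length es) \<and> length es \<ge> 1 \<and> distinct vs \<and> distinct es \<and> set es \<subseteq> S \<and>
   (\<forall>i<length es. ends (es!i) = {vs!i, vs!(Suc i)}))"

lemma find_cycle:
  assumes SE: "S \<subseteq> E" and e0: "e0 \<in> S" and noloop: "\<forall>e\<in>S. etl e \<noteq> ehd e"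
    and deg: "\<forall>e\<in>S. \<forall>w\<in>ends e. \<exists>e'\<in>S. e' \<noteq> e \<and> w \<in> ends e'"
  shows "\<exists>vs es. length vs = length es \<and> length es \<ge> 1 \<and> distinct vs \<and> distinct es \<and>
        set es \<subseteq> S \<and> (\<forall>i < length es. ends (es ! i) = {vs ! i, vs ! ((i + 1) mod length es)})"
proof -
  have init: "pth S ([etl e0, ehd e0], [e0])"
    unfolding pth_def using e0 noloop etlhd SE by auto
  have bound: "length (snd p) < card V" if p: "pth S p" for p
  proof -
    obtain vs es where p': "p = (vs, es)" by fastforce
    have P: "length vs = Suc (length es)" "length es \<ge> 1" "distinct vs" "set es \<subseteq> S"
      "\<forall>i<length es. ends (es!i) = {vs!i, vs!(Suc i)}" using p unfolding pth_def p' by auto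
    have "set vs \<subseteq> V"
    proof
      fix v assume "v \<in> set vs"
      then obtain i where i: "i < length vs" "v = vs!i" using in_set_conv_nth by metis
      show "v \<in> V"
      proof (cases "i < length es")
        case True
        have "es!i \<in> E" using P(4) SE nth_mem[OF True] by blast
        moreover have "v \<in> ends (es!i)" using P(5) True i by auto
        ultimately have "v \<in> ends (es!i)" "es!i \<in> E" by auto
        then show ?thesis using endsV by auto
      next
        case False
        then have "i = Suc (length es - 1)" "length es - 1 < length es" using i P by auto
        then have "es!(length es - 1) \<in> E" using P(4) SE nth_mem by blast
        moreover have "v \<in> ends (es!(length es - 1))"
          using P(5) \<open>length es - 1 < length es\<close> \<open>i = Suc (length es - 1)\<close> i by auto
        ultimately have "v \<in> ends (es!(length es - 1))" "es!(length es - 1) \<in> E" by auto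
        then show ?thesis using endsV by auto
      qed
    qed
    then have "card (set vs) \<le> card V" using finV card_mono by blast
    then show ?thesis using P distinct_card p' by fastforce
  qed
  obtain p where pmax: "pth S p" "\<forall>q. pth S q \<longrightarrow> length (snd q) \<le> length (snd p)"
    using ex_has_greatest_nat[of "pth S" _ "\<lambda>p. length (snd p)" "card V", OF init] bound by blast
  obtain vs es where p': "p = (vs, es)" by fastforce
  have P: "length vs = Suc (length es)" "length es \<ge> 1" "distinct vs" "distinct es" "set es \<subseteq> S"
    "\<forall>i<length es. ends (es!i) = {vs!i, vs!(Suc i)}" using pmax(1) unfolding pth_def p' by auto
  have es0: "es!0 \<in> S" using P nth_mem by (metis One_nat_def Suc_le_lessD subsetD)
  have "0 < length es" using P(2) by linarith
  then have v0: "vs!0 \<in> ends (es!0)" using P(6) by auto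
  obtain e' where e': "e' \<in> S" "e' \<noteq> es!0" "vs!0 \<in> ends e'" using deg es0 v0 by blast
  define u where "u = (if etl e' = vs!0 then ehd e' else etl e')"
  have ends': "ends e' = {u, vs!0}" and u0: "u \<noteq> vs!0"
    using etlhd[of e'] e' SE noloop unfolding u_def by auto
  have e'n: "e' \<notin> set es"
  proof
    assume "e' \<in> set es"
    then obtain l where l: "l < length es" "e' = es!l" using in_set_conv_nth by metis
    then have "l \<noteq> 0" using e'(2) by (metis)
    have "vs!0 = vs!l \<or> vs!0 = vs!(Suc l)" using P(6) l e'(3) by auto
    then show False
      using nth_eq_iff_index_eq[OF P(3), of 0 l] nth_eq_iff_index_eq[OF P(3), of 0 "Suc l"] P(1) l \<open>l \<noteq> 0\<close>
      by auto
  qed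
  show ?thesis
  proof (cases "u \<in> set vs")
    case False
    have "pth S (u#vs, e'#es)"
      unfolding pth_def Let_def
    proof (intro conjI)
      show "\<forall>i<length (snd (u # vs, e' # es)). ends (snd (u # vs, e' # es) ! i) =
          {fst (u # vs, e' # es) ! i, fst (u # vs, e' # es) ! Suc i}"
      proof (intro allI impI)
        fix i assume "i < length (snd (u # vs, e' # es))"
        then show "ends (snd (u # vs, e' # es) ! i) = {fst (u # vs, e' # es) ! i, fst (u # vs, e' # es) ! Suc i}"
          using ends' P(6) by (cases i) auto
      qed
    qed (use P False e'n e' in auto)
    then have "length (e'#es) \<le> length es" using pmax(2) p' by fastforce
    then show ?thesis by simp
  next
    case True
    then obtain j where j: "j < length vs" "u = vs!j" using in_set_conv_nth by metis
    then have j0: "j \<noteq> 0" using u0 by metis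
    have jle: "j \<le> length es" using j P(1) by simp
    define vs' where "vs' = take (Suc j) vs"
    define es' where "es' = take j es @ [e']"
    have l1: "length vs' = Suc j" using vs'_def j by simp
    have l2: "length es' = Suc j" using es'_def jle by simp
    have "distinct es'" unfolding es'_def using P(4) e'n set_take_subset by fastforce
    moreover have "set es' \<subseteq> S" unfolding es'_def using P(5) e'(1) set_take_subset by fastforce
    moreover have "distinct vs'" unfolding vs'_def using P(3) by simp
    moreover have "\<forall>i < length es'. ends (es' ! i) = {vs' ! i, vs' ! ((i + 1) mod length es')}"
    proof (intro allI impI)
      fix i assume i: "i < length es'"
      show "ends (es' ! i) = {vs' ! i, vs' ! ((i + 1) mod length es')}"
      proof (cases "i < j")
        case True
        then have "es'!i = es!i" "vs'!i = vs!i" "(i+1) mod length es' = Suc i" "vs'!(Suc i) = vs!(Suc i)"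
          unfolding es'_def vs'_def using l2 jle by (auto simp: nth_append)
        then show ?thesis using P(6) True jle by simp
      next
        case False
        then have "i = j" using i l2 by simp
        then have "es'!i = e'" "vs'!i = u" "(i+1) mod length es' = 0" "vs'!0 = vs!0"
          unfolding es'_def vs'_def using l2 jle j by (auto simp: nth_append)
        then show ?thesis using ends' by auto
      qed
    qed
    moreover have "length vs' = length es'" "length es' \<ge> 1" using l1 l2 by auto
    ultimately show ?thesis by blast
  qed
qed

end


context G begin

lemma cycle_eq:
  assumes SE: "S \<subseteq> E" and minS: "\<forall>T. T \<subset> S \<longrightarrow> \<not> dep T"
    and len: "length vs = length es" "length es \<ge> 1" and dist: "distinct vs" "distinct es"
    and sub: "set es \<subseteq> S"
    and en: "\<forall>i < length es. ends (es ! i) = {vs ! i, vs ! ((i + 1) mod length es)}"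
  shows "is_cycle E ends S"
proof -
  have "dep (set es)" using cycle_dep[OF len dist _ en] sub SE by blast
  then have "set es = S" using minS sub by blast
  then show ?thesis unfolding is_cycle_def using len dist sub en SE by blast
qed

lemma circuit_cycle:
  assumes SE: "S \<subseteq> E" and dS: "dep S" and minS: "\<forall>T. T \<subset> S \<longrightarrow> \<not> dep T"
  shows "is_cycle E ends S"
proof -
  obtain x s0 where x: "flow x" "\<forall>e. e \<notin> S \<longrightarrow> x e = 0" "s0 \<in> S" "x s0 \<noteq> 0"
    using dS dep_def by blast
  have nz: "\<forall>s\<in>S. x s \<noteq> 0"
  proof (rule ccontr)
    assume "\<not> (\<forall>s\<in>S. x s \<noteq> 0)"
    then obtain s1 where "s1 \<in> S" "x s1 = 0" by blast
    then have "{s\<in>S. x s \<noteq> 0} \<subset> S" by blast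
    moreover have "dep {s\<in>S. x s \<noteq> 0}" unfolding dep_def using x by blast
    ultimately show False using minS by blast
  qed
  show ?thesis
  proof (cases "\<exists>e\<in>S. etl e = ehd e")
    case True
    then obtain e where e: "e \<in> S" "etl e = ehd e" by blast
    have "ends e = {etl e}" using etlhd e SE by auto
    then show ?thesis
      by (intro cycle_eq[OF SE minS, of "[etl e]" "[e]"]) (use e in auto)
  next
    case False
    have deg: "\<forall>e\<in>S. \<forall>w\<in>ends e. \<exists>e'\<in>S. e' \<noteq> e \<and> w \<in> ends e'"
    proof (intro ballI, rule ccontr)
      fix e w assume e: "e \<in> S" "w \<in> ends e" "\<not> (\<exists>e'\<in>S. e' \<noteq> e \<and> w \<in> ends e')"
      have wV: "w \<in> V" using e SE endsV by blast
      have "(\<Sum>e'\<in>{e}. N w e' * x e') = 0"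
        by (rule flow_at[OF x(1,2) SE wV]) (use e SE in auto)
      then have "N w e * x e = 0" by simp
      moreover have "N w e \<noteq> 0" using N_nz2 e SE False by blast
      ultimately show False using nz e by simp
    qed
    obtain vs es where c: "length vs = length es" "length es \<ge> 1" "distinct vs" "distinct es"
        "set es \<subseteq> S" "\<forall>i < length es. ends (es ! i) = {vs ! i, vs ! ((i + 1) mod length es)}"
      using find_cycle[OF SE x(3)] False deg by blast
    show ?thesis by (rule cycle_eq[OF SE minS c])
  qed
qed

lemma cd_dep: assumes "T \<subseteq> E" shows "cols_dependent rk M T \<longleftrightarrow> dep T"
proof
  assume "cols_dependent rk M T"
  then obtain c where c: "\<exists>s\<in>T. c s \<noteq> 0" "\<forall>i<rk. (\<Sum>s\<in>T. c s * M i s) = 0"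
    unfolding cols_dependent_def by blast
  define x where "x e = (if e \<in> T then c e else 0)" for e
  have "(\<Sum>e\<in>E. M i e * x e) = 0" if "i < rk" for i
  proof -
    have "(\<Sum>e\<in>E. M i e * x e) = (\<Sum>e\<in>T. M i e * x e)"
      by (rule sum.mono_neutral_right[OF finE assms]) (auto simp: x_def)
    also have "\<dots> = (\<Sum>s\<in>T. c s * M i s)" by (intro sum.cong) (auto simp: x_def)
    finally show ?thesis using c that by simp
  qed
  then have "flow x" unfolding flow_def using K1 by blast
  moreover have "\<forall>e. e \<notin> T \<longrightarrow> x e = 0" "\<exists>s\<in>T. x s \<noteq> 0" using c(1) unfolding x_def by auto
  ultimately show "dep T" unfolding dep_def by blast
next
  assume "dep T"
  then obtain x where x: "flow x" "\<forall>e. e \<notin> T \<longrightarrow> x e = 0" "\<exists>s\<in>T. x s \<noteq> 0" unfolding dep_def by blast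
  have "(\<Sum>s\<in>T. x s * M i s) = 0" if "i < rk" for i
  proof -
    have "(\<Sum>s\<in>T. x s * M i s) = (\<Sum>e\<in>E. M i e * x e)"
      by (rule sum.mono_neutral_cong_left[OF finE assms]) (use x(2) in auto)
    moreover have "\<forall>i<rk. (\<Sum>e\<in>E. M i e * x e) = 0" using x(1) K1[of x] flow_def by blast
    ultimately show ?thesis using that by simp
  qed
  then show "cols_dependent rk M T" unfolding cols_dependent_def using x(3) by blast
qed

lemma represents_M: "represents rk M E (is_cycle E ends)"
  unfolding represents_def
proof (intro allI impI)
  fix S assume SE: "S \<subseteq> E"
  have mc: "matrix_circuit rk M S \<longleftrightarrow> dep S \<and> (\<forall>T. T \<subset> S \<longrightarrow> \<not> dep T)"
    unfolding matrix_circuit_def using cd_dep SE by (meson psubset_imp_subset subset_trans)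
  show "is_cycle E ends S \<longleftrightarrow> matrix_circuit rk M S"
  proof
    assume "is_cycle E ends S"
    then obtain vs es where c: "length vs = length es" "length es \<ge> 1" "distinct vs" "distinct es"
        "set es \<subseteq> E" "S = set es" "\<forall>i < length es. ends (es ! i) = {vs ! i, vs ! ((i + 1) mod length es)}"
      unfolding is_cycle_def by blast
    have "dep S" using cycle_dep[OF c(1-5,7)] c(6) by simp
    moreover have "\<forall>T. T \<subset> S \<longrightarrow> \<not> dep T"
    proof (intro allI impI notI)
      fix T assume T: "T \<subset> S" "dep T"
      then obtain x where x: "flow x" "\<forall>e. e \<notin> T \<longrightarrow> x e = 0" "\<exists>s\<in>T. x s \<noteq> 0" unfolding dep_def by blast
      have "\<forall>s\<in>set es. x s = 0" using cycle_min[OF c(1-5,7) x(1,2)] T c(6) by blast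
      then show False using x(3) T c(6) by blast
    qed
    ultimately show "matrix_circuit rk M S" using mc by blast
  next
    assume "matrix_circuit rk M S"
    then show "is_cycle E ends S" using mc circuit_cycle SE by blast
  qed
qed

end



lemma represents_cong:
  assumes "\<forall>i<m. \<forall>e. M1 i e = M2 i e"
  shows "represents m M1 X c \<longleftrightarrow> represents m M2 X c"
proof -
  have "cols_dependent m M1 S \<longleftrightarrow> cols_dependent m M2 S" for S
    unfolding cols_dependent_def using assms by simp
  then show ?thesis unfolding represents_def matrix_circuit_def by simp
qed

lemma sum_split:
  assumes "finite E"
  shows "(\<Sum>c\<in>Inl ` E \<union> Inr ` {..<(r::nat)}. f c) = (\<Sum>e\<in>E. f (Inl e)) + (\<Sum>j<r. f (Inr j))"
proof -
  have "(\<Sum>c\<in>Inl ` E \<union> Inr ` {..<r}. f c) = (\<Sum>c\<in>Inl ` E. f c) + (\<Sum>c\<in>Inr ` {..<r}. f c)"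
    by (rule sum.union_disjoint) (use assms in auto)
  also have "\<dots> = (\<Sum>e\<in>E. f (Inl e)) + (\<Sum>j<r. f (Inr j))"
    by (simp add: sum.reindex)
  finally show ?thesis .
qed

context G begin

definition "w a e = (\<Sum>k<rk. if sig k = a then M k e else 0) - (if e = a then 1 else 0)"

lemma w_tree: assumes "k < rk" shows "w (sig k) e = M k e - (if e = sig k then 1 else 0)"
proof -
  have "(\<Sum>k'<rk. if sig k' = sig k then M k' e else 0) = (\<Sum>k'<rk. if k' = k then M k e else 0)"
  proof (intro sum.cong refl)
    fix k' assume "k' \<in> {..<rk}"
    then have "sig k' = sig k \<longleftrightarrow> k' = k" using sig_bij assms unfolding bij_betw_def inj_on_def by auto
    then show "(if sig k' = sig k then M k' e else 0) = (if k' = k then M k e else 0)" by auto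
  qed
  also have "\<dots> = M k e" using assms by simp
  finally show ?thesis unfolding w_def by simp
qed

lemma w_free: assumes "a \<notin> E1" shows "w a e = - (if e = a then 1 else 0)"
proof -
  have "\<forall>k\<in>{..<rk}. sig k \<noteq> a" using assms E1_def by auto
  then show ?thesis unfolding w_def by simp
qed

lemma w_zero: assumes "k < rk" shows "w a (sig k) = 0"
proof (cases "a \<in> E1")
  case True
  then obtain k' where k': "k' < rk" "a = sig k'" unfolding E1_def by auto
  then show ?thesis using w_tree[OF k'(1)] M_id[OF k'(1) assms] sig_bij assms
    unfolding bij_betw_def inj_on_def by auto
next
  case False
  then have "sig k \<noteq> a" using assms E1_def by auto
  then show ?thesis using w_free[OF False] by simp
qed

lemma w_kernel: assumes "a \<in> E" "\<forall>i<rk. (\<Sum>e\<in>E. M i e * y e) = 0"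
  shows "(\<Sum>e\<in>E. w a e * y e) = - y a"
proof -
  have p: "w a e * y e = (\<Sum>k<rk. if sig k = a then M k e * y e else 0) - (if e = a then y e else 0)" for e
  proof -
    have "(\<Sum>k<rk. if sig k = a then M k e else 0) * y e = (\<Sum>k<rk. if sig k = a then M k e * y e else 0)"
      unfolding sum_distrib_right by (intro sum.cong) auto
    then show ?thesis unfolding w_def by (simp add: left_diff_distrib)
  qed
  have "(\<Sum>e\<in>E. w a e * y e) = (\<Sum>e\<in>E. \<Sum>k<rk. if sig k = a then M k e * y e else 0) - (\<Sum>e\<in>E. if e = a then y e else 0)"
    unfolding p by (simp add: sum_subtractf)
  also have "(\<Sum>e\<in>E. \<Sum>k<rk. if sig k = a then M k e * y e else 0) = (\<Sum>k<rk. \<Sum>e\<in>E. if sig k = a then M k e * y e else 0)"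
    by (rule sum.swap)
  also have "\<dots> = 0"
  proof (rule sum.neutral, rule ballI)
    fix k assume "k \<in> {..<rk}"
    then show "(\<Sum>e\<in>E. if sig k = a then M k e * y e else 0) = 0" using assms(2) by (cases "sig k = a") auto
  qed
  also have "(\<Sum>e\<in>E. if e = a then y e else 0) = y a" using assms(1) finE by simp
  finally show ?thesis by simp
qed

lemma M_sig: "k1 < rk \<Longrightarrow> k2 < rk \<Longrightarrow> M k1 (sig k2) = (if k1 = k2 then 1 else 0)" by (rule M_id)

lemma coef: assumes "a \<in> E" "b \<in> E" "a \<noteq> b"
  shows "\<exists>\<alpha> \<beta>. \<alpha> \<noteq> 0 \<and> \<beta> \<noteq> 0 \<and> (\<forall>e. \<alpha> * w a e + \<beta> * w b e \<in> {-1, 0, 1})"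
proof (cases "a \<in> E1")
  case aT: True
  then obtain k1 where k1: "k1 < rk" "a = sig k1" unfolding E1_def by auto
  show ?thesis
  proof (cases "b \<in> E1")
    case bT: True
    then obtain k2 where k2: "k2 < rk" "b = sig k2" unfolding E1_def by auto
    have k12: "k1 \<noteq> k2" using k1 k2 assms by auto
    have wa: "w a e = M k1 e - (if e = a then 1 else 0)" for e using w_tree k1 by simp
    have wb: "w b e = M k2 e - (if e = b then 1 else 0)" for e using w_tree k2 by simp
    have Ma: "M k1 a = 1" "M k2 a = 0" "M k1 b = 0" "M k2 b = 1" using M_sig k1 k2 k12 by auto
    have s1: "sg k1 \<in> {-1,1}" and s2: "sg k2 \<in> {-1,1}" using sg_vals k1 k2 by auto
    have lam: "(\<forall>e. dlt (Dset (tau k1)) e * dlt (Dset (tau k2)) e \<noteq> -1) \<or>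
               (\<forall>e. dlt (Dset (tau k1)) e * dlt (Dset (tau k2)) e \<noteq> 1)"
      using laminar tau_in k1 k2 by blast
    show ?thesis
    proof (cases "\<forall>e. dlt (Dset (tau k1)) e * dlt (Dset (tau k2)) e \<noteq> -1")
      case L: True
      have "\<forall>e. 1 * w a e + (- (sg k1 * sg k2)) * w b e \<in> {-1, 0, 1}"
      proof
        fix e
        show "1 * w a e + (- (sg k1 * sg k2)) * w b e \<in> {-1, 0, 1}"
        proof (cases "e = a \<or> e = b")
          case True then show ?thesis using wa wb Ma assms(3) by auto
        next
          case False
          then have "w a e = sg k1 * dlt (Dset (tau k1)) e" "w b e = sg k2 * dlt (Dset (tau k2)) e"
            using wa wb unfolding M_def by auto
          then have "1 * w a e + (- (sg k1 * sg k2)) * w b e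
              = sg k1 * dlt (Dset (tau k1)) e - sg k1 * sg k2 * sg k2 * dlt (Dset (tau k2)) e"
            by (simp add: algebra_simps)
          moreover have "dlt (Dset (tau k1)) e * dlt (Dset (tau k2)) e \<noteq> -1" using L by blast
          ultimately show ?thesis using s1 s2 dlt_vals[of "Dset (tau k1)" e] dlt_vals[of "Dset (tau k2)" e]
            by auto
        qed
      qed
      moreover have "- (sg k1 * sg k2) \<noteq> 0" using s1 s2 by auto
      ultimately show ?thesis by (metis one_neq_zero)
    next
      case L: False
      then have L2: "\<forall>e. dlt (Dset (tau k1)) e * dlt (Dset (tau k2)) e \<noteq> 1" using lam by blast
      have "\<forall>e. 1 * w a e + (sg k1 * sg k2) * w b e \<in> {-1, 0, 1}"
      proof
        fix e
        show "1 * w a e + (sg k1 * sg k2) * w b e \<in> {-1, 0, 1}"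
        proof (cases "e = a \<or> e = b")
          case True then show ?thesis using wa wb Ma assms(3) by auto
        next
          case False
          then have "w a e = sg k1 * dlt (Dset (tau k1)) e" "w b e = sg k2 * dlt (Dset (tau k2)) e"
            using wa wb unfolding M_def by auto
          then have "1 * w a e + (sg k1 * sg k2) * w b e
              = sg k1 * dlt (Dset (tau k1)) e + sg k1 * sg k2 * sg k2 * dlt (Dset (tau k2)) e"
            by (simp add: algebra_simps)
          moreover have "dlt (Dset (tau k1)) e * dlt (Dset (tau k2)) e \<noteq> 1" using L2 by blast
          ultimately show ?thesis using s1 s2 dlt_vals[of "Dset (tau k1)" e] dlt_vals[of "Dset (tau k2)" e]
            by auto
        qed
      qed
      moreover have "sg k1 * sg k2 \<noteq> 0" using s1 s2 by auto
      ultimately show ?thesis by (metis one_neq_zero)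
    qed
  next
    case bF: False
    have wa: "w a e = M k1 e - (if e = a then 1 else 0)" for e using w_tree k1 by simp
    have wb: "w b e = - (if e = b then 1 else 0)" for e using w_free bF by simp
    have Ma: "M k1 a = 1" using M_sig k1 by auto
    define \<beta> where "\<beta> = (if M k1 b = 0 then 1 else M k1 b)"
    have Mb: "M k1 b \<in> {-1,0,1}" using M_vals k1 by blast
    have "\<forall>e. 1 * w a e + \<beta> * w b e \<in> {-1, 0, 1}"
    proof
      fix e
      show "1 * w a e + \<beta> * w b e \<in> {-1, 0, 1}"
        using wa wb Ma Mb assms(3) M_vals[OF k1(1), of e] unfolding \<beta>_def by auto
    qed
    moreover have "\<beta> \<noteq> 0" unfolding \<beta>_def by auto
    ultimately show ?thesis by (metis one_neq_zero)
  qed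
next
  case aF: False
  show ?thesis
  proof (cases "b \<in> E1")
    case bT: True
    then obtain k2 where k2: "k2 < rk" "b = sig k2" unfolding E1_def by auto
    have wb: "w b e = M k2 e - (if e = b then 1 else 0)" for e using w_tree k2 by simp
    have wa: "w a e = - (if e = a then 1 else 0)" for e using w_free aF by simp
    have Mb: "M k2 b = 1" using M_sig k2 by auto
    define \<alpha> where "\<alpha> = (if M k2 a = 0 then 1 else M k2 a)"
    have Ma: "M k2 a \<in> {-1,0,1}" using M_vals k2 by blast
    have "\<forall>e. \<alpha> * w a e + 1 * w b e \<in> {-1, 0, 1}"
    proof
      fix e
      show "\<alpha> * w a e + 1 * w b e \<in> {-1, 0, 1}"
        using wa wb Ma Mb assms(3) M_vals[OF k2(1), of e] unfolding \<alpha>_def by auto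
    qed
    moreover have "\<alpha> \<noteq> 0" unfolding \<alpha>_def by auto
    ultimately show ?thesis by (metis one_neq_zero)
  next
    case bF: False
    have "\<forall>e. 1 * w a e + 1 * w b e \<in> {-1, 0, 1}"
      using w_free aF bF assms(3) by auto
    then show ?thesis by (metis one_neq_zero)
  qed
qed

end


context G begin

lemma main:
  assumes PP: "\<forall>p\<in>P. \<exists>e1 e2. p = {e1, e2} \<and> e1 \<noteq> e2 \<and> e1 \<in> E \<and> e2 \<in> E"
  shows "\<exists>(r::nat) (A :: nat \<Rightarrow> 'e + nat \<Rightarrow> real) (E1 :: 'e set) (\<sigma> :: nat \<Rightarrow> 'e).
     r \<le> card P \<and>
     E1 \<subseteq> E \<and> bij_betw \<sigma> {..<graph_rank V E ends} E1 \<and>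
     (\<forall>k < graph_rank V E ends. \<forall>i < graph_rank V E ends + r.
        A i (Inl (\<sigma> k)) = (if i = k then 1 else 0)) \<and>
     (\<forall>j < r. \<forall>i < graph_rank V E ends + r.
        A i (Inr j) = (if i = graph_rank V E ends + j then 1 else 0)) \<and>
     (\<forall>e \<in> E - E1. \<forall>i < graph_rank V E ends + r. A i (Inl e) \<in> {-1, 0, 1}) \<and>
     represents (graph_rank V E ends) (\<lambda>i e. A i (Inl e)) E (is_cycle E ends) \<and>
     (\<forall>e1 e2. {e1, e2} \<in> P \<longrightarrow>
        (\<exists>g \<in> Inl ` E \<union> Inr ` {..<r}. \<exists>\<alpha> \<beta> :: real. \<alpha> \<noteq> 0 \<and> \<beta> \<noteq> 0 \<and>
           (\<forall>x :: 'e + nat \<Rightarrow> real.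
              (\<forall>i < graph_rank V E ends + r. (\<Sum>c \<in> Inl ` E \<union> Inr ` {..<r}. A i c * x c) = 0)
              \<longrightarrow> x g = \<alpha> * x (Inl e1) + \<beta> * x (Inl e2))))"
proof -
  have gr: "graph_rank V E ends = rk" unfolding rk_def ..
  define r where "r = card P"
  have "P \<subseteq> Pow E"
  proof
    fix p assume "p \<in> P"
    then obtain e1 e2 where "p = {e1,e2}" "e1 \<in> E" "e2 \<in> E" using PP by metis
    then show "p \<in> Pow E" by auto
  qed
  then have finP: "finite P" using finE finite_subset by blast
  obtain pi where pi: "bij_betw pi {..<r} P"
    using ex_bij_betw_nat_finite[OF finP] unfolding r_def by (auto simp: atLeast0LessThan)
  define Q where "Q j ab \<longleftrightarrow> pi j = {fst ab, snd ab} \<and> fst ab \<noteq> snd ab \<and> fst ab \<in> E \<and> snd ab \<in> E" for j ab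
  define ab where "ab j = (SOME ab. Q j ab)" for j
  have Qab: "Q j (ab j)" if "j < r" for j
  proof -
    have "pi j \<in> P" using pi that bij_betwE by blast
    then obtain e1 e2 where "pi j = {e1, e2} \<and> e1 \<noteq> e2 \<and> e1 \<in> E \<and> e2 \<in> E" using PP by blast
    then have "Q j (e1, e2)" unfolding Q_def by simp
    then show ?thesis unfolding ab_def by (rule someI[where P="Q j"])
  qed
  define pa where "pa j = fst (ab j)" for j
  define pb where "pb j = snd (ab j)" for j
  define C where "C j c \<longleftrightarrow> fst c \<noteq> 0 \<and> snd c \<noteq> 0 \<and> (\<forall>e. fst c * w (pa j) e + snd c * w (pb j) e \<in> {-1, 0, 1::real})" for j c
  define co where "co j = (SOME c. C j c)" for j
  have Cco: "C j (co j)" if "j < r" for j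
  proof -
    have "pa j \<in> E" "pb j \<in> E" "pa j \<noteq> pb j" using Qab[OF that] unfolding Q_def pa_def pb_def by auto
    then obtain \<alpha> \<beta> where "\<alpha> \<noteq> 0 \<and> \<beta> \<noteq> 0 \<and> (\<forall>e. \<alpha> * w (pa j) e + \<beta> * w (pb j) e \<in> {-1, 0, 1})"
      using coef by blast
    then have "C j (\<alpha>, \<beta>)" unfolding C_def by simp
    then show ?thesis unfolding co_def by (rule someI[where P="C j"])
  qed
  define al where "al j = fst (co j)" for j
  define be where "be j = snd (co j)" for j
  define D where "D j e = al j * w (pa j) e + be j * w (pb j) e" for j e
  define A :: "nat \<Rightarrow> 'e + nat \<Rightarrow> real" where
    "A i c = (case c of Inl e \<Rightarrow> (if i < rk then M i e else D (i - rk) e) | Inr j \<Rightarrow> (if i = rk + j then 1 else 0))" for i c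
  have c1: "\<forall>k < rk. \<forall>i < rk + r. A i (Inl (sig k)) = (if i = k then 1 else 0)"
  proof (intro allI impI)
    fix k i assume k: "k < rk" and i: "i < rk + r"
    show "A i (Inl (sig k)) = (if i = k then 1 else 0)"
    proof (cases "i < rk")
      case True then show ?thesis using M_id[OF True k] unfolding A_def by simp
    next
      case False
      then show ?thesis using w_zero[OF k] k unfolding A_def D_def by auto
    qed
  qed
  have c2: "\<forall>j < r. \<forall>i < rk + r. A i (Inr j) = (if i = rk + j then 1 else 0)" unfolding A_def by simp
  have c3: "\<forall>e \<in> E - E1. \<forall>i < rk + r. A i (Inl e) \<in> {-1, 0, 1}"
  proof (intro ballI allI impI)
    fix e i assume e: "e \<in> E - E1" and i: "i < rk + r"
    show "A i (Inl e) \<in> {-1, 0, 1}"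
    proof (cases "i < rk")
      case True then show ?thesis using M_vals[OF True] unfolding A_def by simp
    next
      case False
      then have "i - rk < r" using i by simp
      then have "C (i - rk) (co (i - rk))" by (rule Cco)
      then show ?thesis using False unfolding A_def D_def C_def al_def be_def by simp
    qed
  qed
  have c4: "represents rk (\<lambda>i e. A i (Inl e)) E (is_cycle E ends)"
    using represents_M represents_cong[of rk "\<lambda>i e. A i (Inl e)" M] unfolding A_def by simp
  have c5: "\<forall>e1 e2. {e1, e2} \<in> P \<longrightarrow>
        (\<exists>g \<in> Inl ` E \<union> Inr ` {..<r}. \<exists>\<alpha> \<beta> :: real. \<alpha> \<noteq> 0 \<and> \<beta> \<noteq> 0 \<and>
           (\<forall>x :: 'e + nat \<Rightarrow> real.
              (\<forall>i < rk + r. (\<Sum>c \<in> Inl ` E \<union> Inr ` {..<r}. A i c * x c) = 0)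
              \<longrightarrow> x g = \<alpha> * x (Inl e1) + \<beta> * x (Inl e2)))"
  proof (intro allI impI)
    fix e1 e2 assume P12: "{e1, e2} \<in> P"
    then obtain j where j: "j < r" "pi j = {e1, e2}" using pi unfolding bij_betw_def by force
    have q: "pi j = {pa j, pb j}" "pa j \<noteq> pb j" "pa j \<in> E" "pb j \<in> E"
      using Qab[OF j(1)] unfolding Q_def pa_def pb_def by auto
    have cc: "al j \<noteq> 0" "be j \<noteq> 0" using Cco[OF j(1)] unfolding C_def al_def be_def by auto
    have ker: "x (Inr j) = al j * x (Inl (pa j)) + be j * x (Inl (pb j))"
      if kx: "\<forall>i < rk + r. (\<Sum>c \<in> Inl ` E \<union> Inr ` {..<r}. A i c * x c) = 0" for x :: "'e + nat \<Rightarrow> real"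
    proof -
      define y where "y e = x (Inl e)" for e
      have My: "\<forall>i<rk. (\<Sum>e\<in>E. M i e * y e) = 0"
      proof (intro allI impI)
        fix i assume i: "i < rk"
        have "(\<Sum>c \<in> Inl ` E \<union> Inr ` {..<r}. A i c * x c) = (\<Sum>e\<in>E. M i e * y e)"
          unfolding sum_split[OF finE] using i unfolding A_def y_def by simp
        then show "(\<Sum>e\<in>E. M i e * y e) = 0" using kx i by simp
      qed
      have "(\<Sum>ja<r. (if j = ja then 1 else 0) * x (Inr ja)) = (\<Sum>ja<r. if j = ja then x (Inr ja) else 0)"
        by (intro sum.cong) auto
      also have "\<dots> = x (Inr j)" using j(1) by (simp add: sum.delta)
      finally have hd: "(\<Sum>ja<r. (if j = ja then 1 else 0) * x (Inr ja)) = x (Inr j)" .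
      have "(\<Sum>c \<in> Inl ` E \<union> Inr ` {..<r}. A (rk + j) c * x c) = (\<Sum>e\<in>E. D j e * y e) + x (Inr j)"
        unfolding sum_split[OF finE] using j(1) hd unfolding A_def y_def by simp
      moreover have "(\<Sum>e\<in>E. D j e * y e) = al j * (\<Sum>e\<in>E. w (pa j) e * y e) + be j * (\<Sum>e\<in>E. w (pb j) e * y e)"
        unfolding D_def by (simp add: algebra_simps sum.distrib sum_distrib_left)
      moreover have "(\<Sum>e\<in>E. w (pa j) e * y e) = - y (pa j)" "(\<Sum>e\<in>E. w (pb j) e * y e) = - y (pb j)"
        using w_kernel q My by auto
      moreover have "(\<Sum>c \<in> Inl ` E \<union> Inr ` {..<r}. A (rk + j) c * x c) = 0" using kx j by simp
      ultimately show ?thesis unfolding y_def by simp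
    qed
    have gin: "Inr j \<in> Inl ` E \<union> Inr ` {..<r}" using j by simp
    have "(pa j = e1 \<and> pb j = e2) \<or> (pa j = e2 \<and> pb j = e1)" using q j by (auto simp: doubleton_eq_iff)
    then show "\<exists>g \<in> Inl ` E \<union> Inr ` {..<r}. \<exists>\<alpha> \<beta> :: real. \<alpha> \<noteq> 0 \<and> \<beta> \<noteq> 0 \<and>
           (\<forall>x :: 'e + nat \<Rightarrow> real.
              (\<forall>i < rk + r. (\<Sum>c \<in> Inl ` E \<union> Inr ` {..<r}. A i c * x c) = 0)
              \<longrightarrow> x g = \<alpha> * x (Inl e1) + \<beta> * x (Inl e2))"
    proof
      assume "pa j = e1 \<and> pb j = e2"
      then show ?thesis using gin cc ker by blast
    next
      assume "pa j = e2 \<and> pb j = e1"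
      then have "\<forall>x :: 'e + nat \<Rightarrow> real.
              (\<forall>i < rk + r. (\<Sum>c \<in> Inl ` E \<union> Inr ` {..<r}. A i c * x c) = 0)
              \<longrightarrow> x (Inr j) = be j * x (Inl e1) + al j * x (Inl e2)" using ker by (simp add: add.commute)
      then show ?thesis using gin cc by blast
    qed
  qed
  have "r \<le> card P" unfolding r_def by simp
  then show ?thesis unfolding gr using c1 c2 c3 c4 c5 E1E sig_bij by blast
qed

end

theorem theorem3p1:
  fixes V :: "'v set" and E :: "'e set" and ends :: "'e \<Rightarrow> 'v set" and P :: "'e set set"
  assumes "finite_graph V E ends"
    and "\<forall>p\<in>P. \<exists>e1 e2. p = {e1, e2} \<and> e1 \<noteq> e2 \<and> e1 \<in> E \<and> e2 \<in> E"
  shows "\<exists>(r::nat) (A :: nat \<Rightarrow> 'e + nat \<Rightarrow> real) (E1 :: 'e set) (\<sigma> :: nat \<Rightarrow> 'e).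
     r \<le> card P \<and>
     \<comment> \<open>(i) block form; F = Inr ` {..<r}, rows 0 ..< graph_rank + r\<close>
     E1 \<subseteq> E \<and> bij_betw \<sigma> {..<graph_rank V E ends} E1 \<and>
     (\<forall>k < graph_rank V E ends. \<forall>i < graph_rank V E ends + r.
        A i (Inl (\<sigma> k)) = (if i = k then 1 else 0)) \<and>
     (\<forall>j < r. \<forall>i < graph_rank V E ends + r.
        A i (Inr j) = (if i = graph_rank V E ends + j then 1 else 0)) \<and>
     (\<forall>e \<in> E - E1. \<forall>i < graph_rank V E ends + r. A i (Inl e) \<in> {-1, 0, 1}) \<and>
     \<comment> \<open>(ii) (I | C) represents the cycle matroid of G\<close>
     represents (graph_rank V E ends) (\<lambda>i e. A i (Inl e)) E (is_cycle E ends) \<and>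
     \<comment> \<open>(iii)\<close>
     (\<forall>e1 e2. {e1, e2} \<in> P \<longrightarrow>
        (\<exists>g \<in> Inl ` E \<union> Inr ` {..<r}. \<exists>\<alpha> \<beta> :: real. \<alpha> \<noteq> 0 \<and> \<beta> \<noteq> 0 \<and>
           (\<forall>x :: 'e + nat \<Rightarrow> real.
              (\<forall>i < graph_rank V E ends + r. (\<Sum>c \<in> Inl ` E \<union> Inr ` {..<r}. A i c * x c) = 0)
              \<longrightarrow> x g = \<alpha> * x (Inl e1) + \<beta> * x (Inl e2))))"
  using G.main[OF G.intro[OF assms(1)] assms(2)] .

end
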